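(* Suppose Assumption 4.1 holds, and that $\sum_{n=1}^\infty p_n<\infty$ and $\lim_{n\to\infty}\mu_n=0$. Then the sequence $\{x_n\}$ generated by Algorithm 3.1 converges linearly to some point of $\Omega$; that is, there exist $p\in\Omega$, $q\in(0,1)$ and $K\ge0$ such that $\|x_n-p\|^2\le K q^{n}$ for all $n$.
   Context: Let $H$ be a real Hilbert space, $A:H\to H$ a single-valued mapping and $B:H\to 2^H$ a set-valued mapping, and let $\Omega:=(A+B)^{-1}(0)=\{x\in H:\ 0\in Ax+Bx\}$. Algorithm 3.1 is the following iteration. Fix $x_0,x_1\in H$, $\mu\in(0,1)$, $\lambda_1>0$, real sequences $\{\alpha_n\},\{\beta_n\},\{\theta_n\}$ and nonnegative real sequences $\{\mu_n\},\{p_n\}$. For $n=1,2,\dots$ compute $w_n=x_n+\alpha_n(x_n-x_{n-1})$, $z_n=x_n+\beta_n(x_n-x_{n-1})$, $y_n=(I+\lambda_nB)^{-1}(I-\lambda_nA)w_n$, and set $\lambda_{n+1}=\min\{(\mu_n+\mu)\|w_n-y_n\|/\|Aw_n-Ay_n\|,\ \lambda_n+p_n\}$ if $Aw_n\neq Ay_n$, and $\lambda_{n+1}=\lambda_n+p_n$ otherwise. If $w_n=y_n$ the algorithm stops (then $y_n\in\Omega$). Otherwise set $x_{n+1}=(1-\theta_n)z_n+\theta_n\big(y_n-\lambda_n(Ay_n-Aw_n)\big)$ and continue. Here $I$ is the identity and $(I+\lambda B)^{-1}$ is the resolvent of $B$. Throughout, it is assumed that the algorithm does not stop, so that infinite sequences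 $\{x_n\},\{w_n\},\{z_n\},\{y_n\},\{\lambda_n\}$ are generated. Assumption 4.1: (i) $\Omega\neq\emptyset$. (ii) Either $A$ is $L$-Lipschitz continuous and $r$-strongly monotone and $B$ is maximal monotone, or $A$ is $L$-Lipschitz continuous and monotone and $B$ is maximal monotone and $r$-strongly monotone (for some $r>0$). (iii) With $\hat\lambda:=\min\{\mu/L,\lambda_1\}$ and $\tau:=1-\frac12\min\{1-\mu,\ 2\hat\lambda r\}\in(\tfrac12,1)$, the parameters satisfy: ($c_1$) $0\le\beta_n\le\beta<\frac12\big(\frac1\tau-1\big)$; ($c_2$) $0\le\alpha_n\le\alpha<\frac{1-\tau}{\tau}$; ($c_3$) $\max\Big\{\frac{1-\beta}{1+\alpha-\beta},\ \frac{\beta}{1+\beta-\tau(1+\alpha)}\Big\}<\theta\le\theta_{n-1}\le\theta_n\le\frac{-1-\beta+\sqrt{(1+\beta)^2-4(\frac1\tau-1-2\beta)(\beta-1)}}{2(\frac1\tau-1-2\beta)}$ for all $n$, where $\alpha,\beta,\theta$ are constants. A set-valued $B$ is $r$-strongly monotone if $\langle u-v,x-y\rangle\ge r\|x-y\|^2$ whenever $u\in Bx$, $v\in By$; a single-valued $A$ is $r$-strongly monotone if $\langle Ax-Ay,x-y\rangle\ge r\|x-y\|^2$ for all $x,y$. *)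

theory Defs
  imports "HOL-Analysis.Analysis"
begin

definition strongly_monotone_op :: "real \<Rightarrow> ('a::real_inner \<Rightarrow> 'a) \<Rightarrow> bool" where
  "strongly_monotone_op r A \<longleftrightarrow> (\<forall>x y. inner (A x - A y) (x - y) \<ge> r * (norm (x - y))\<^sup>2)"

definition monotone_op :: "('a::real_inner \<Rightarrow> 'a) \<Rightarrow> bool" where
  "monotone_op A \<longleftrightarrow> (\<forall>x y. inner (A x - A y) (x - y) \<ge> 0)"

definition monotone_setop :: "('a::real_inner \<Rightarrow> 'a set) \<Rightarrow> bool" where
  "monotone_setop B \<longleftrightarrow> (\<forall>x y u v. u \<in> B x \<longrightarrow> v \<in> B y \<longrightarrow> inner (u - v) (x - y) \<ge> 0)"

definition maximal_monotone :: "('a::real_inner \<Rightarrow> 'a set) \<Rightarrow> bool" where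
  "maximal_monotone B \<longleftrightarrow> monotone_setop B \<and>
     (\<forall>x u. (\<forall>y v. v \<in> B y \<longrightarrow> inner (u - v) (x - y) \<ge> 0) \<longrightarrow> u \<in> B x)"

definition strongly_monotone_setop :: "real \<Rightarrow> ('a::real_inner \<Rightarrow> 'a set) \<Rightarrow> bool" where
  "strongly_monotone_setop r B \<longleftrightarrow>
     (\<forall>x y u v. u \<in> B x \<longrightarrow> v \<in> B y \<longrightarrow> inner (u - v) (x - y) \<ge> r * (norm (x - y))\<^sup>2)"

definition zeros_sum :: "('a::real_vector \<Rightarrow> 'a) \<Rightarrow> ('a \<Rightarrow> 'a set) \<Rightarrow> 'a set" where
  "zeros_sum A B = {x. \<exists>u \<in> B x. A x + u = 0}"

text \<open>y = (I + lam B)^{-1} v, written relationally: v \<in> y + lam B y.\<close>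
definition is_resolvent_value :: "real \<Rightarrow> ('a::real_vector \<Rightarrow> 'a set) \<Rightarrow> 'a \<Rightarrow> 'a \<Rightarrow> bool" where
  "is_resolvent_value lam B v y \<longleftrightarrow> (\<exists>u \<in> B y. v = y + lam *\<^sub>R u)"

definition lam_hat :: "real \<Rightarrow> real \<Rightarrow> real \<Rightarrow> real" where
  "lam_hat mu L lam1 = min (mu / L) lam1"

definition tau_param :: "real \<Rightarrow> real \<Rightarrow> real \<Rightarrow> real \<Rightarrow> real" where
  "tau_param mu L lam1 r = 1 - (1/2) * min (1 - mu) (2 * lam_hat mu L lam1 * r)"

definition theta_upper :: "real \<Rightarrow> real \<Rightarrow> real" where
  "theta_upper tau beta =
     (-1 - beta + sqrt ((1 + beta)\<^sup>2 - 4 * (1/tau - 1 - 2*beta) * (beta - 1))) / (2 * (1/tau - 1 - 2*beta))"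

end

theory Submission
  imports Defs
begin



lemma thu_root:
  fixes tau beta :: real
  defines "t \<equiv> 1/tau - 1 - 2*beta"
  assumes t: "t > 0" and b: "0 \<le> beta" "beta \<le> 1"
  shows "t * (theta_upper tau beta)^2 + (1+beta) * theta_upper tau beta + beta - 1 = 0"
proof -
  define D where "D = (1 + beta)\<^sup>2 - 4 * t * (beta - 1)"
  have D0: "D \<ge> 0" using t b unfolding D_def
  proof -
    have "4*t*(beta-1) \<le> 0" using t b by (simp add: mult_nonneg_nonpos)
    moreover have "(1+beta)^2 \<ge> 0" by simp
    ultimately show "(1 + beta)\<^sup>2 - 4 * t * (beta - 1) \<ge> 0" by linarith
  qed
  define S where "S = sqrt D"
  have SS: "S^2 = D" using D0 S_def by simp
  have eq: "theta_upper tau beta = (S - (1+beta)) / (2*t)"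
    unfolding theta_upper_def S_def D_def t_def by (simp add: algebra_simps)
  show ?thesis unfolding eq using t SS unfolding D_def
    by (simp add: field_simps power2_eq_square) algebra
qed



lemma coef:
  fixes tau alpha beta th h an bn :: real
  assumes tau: "1/2 < tau" "tau < 1"
  and an: "0 \<le> an" "an \<le> alpha" and bn: "0 \<le> bn" "bn \<le> beta"
  and bb: "beta < (1/2)*(1/tau - 1)"
  and ab: "alpha < (1-tau)/tau"
  and lb1: "(1-beta)/(1+alpha-beta) < th"
  and lb2: "beta/(1+beta-tau*(1+alpha)) < th"
  and h: "th \<le> h" "h \<le> theta_upper tau beta"
  shows "0 < th \<and> 0 < h \<and> h < 1 \<and>
   (1-h)*(1+bn) + h*tau*(1+an) \<le> 1+beta - th*(1+beta-tau*(1+alpha)) \<and>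
   h*bn*(1+bn) + h^2*tau*an*(1+an)/(1-h) + bn*(1-bn) \<le> (1-beta) - th^2*(1-tau*(1+alpha))*(1/tau-1)"
proof -
  define s where "s = 1/tau - 1"
  define k where "k = tau*(1+alpha)"
  define t where "t = 1/tau - 1 - 2*beta"
  have tau0: "tau > 0" using tau by simp
  have s0: "0 < s" "s < 1" using tau unfolding s_def by (auto simp: field_simps)
  have b0: "0 \<le> beta" using bn by simp
  have a0: "0 \<le> alpha" using an by simp
  have as: "alpha < s" using ab tau0 unfolding s_def by (simp add: field_simps)
  have bs: "beta < s/2" using bb unfolding s_def by simp
  have k1: "k < 1"
  proof -
    have "k < tau*(1+s)" unfolding k_def using as tau0 by simp
    also have "tau*(1+s) = 1" unfolding s_def using tau0 by (simp add: field_simps)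
    finally show ?thesis .
  qed
  have kt: "tau \<le> k" unfolding k_def using a0 tau0 by simp
  have t0: "t > 0" unfolding t_def using bs s_def by simp
  have pos1: "1+alpha-beta > 0" using bs s0 a0 by linarith
  have th0: "0 < th"
  proof -
    have "0 < (1-beta)/(1+alpha-beta)" using pos1 bs s0 by (intro divide_pos_pos) auto
    then show ?thesis using lb1 by linarith
  qed
  have h0: "0 < h" using th0 h by simp
  have pos2: "1+beta-k > 0" using k1 b0 by simp
  have l2: "beta < th*(1+beta-k)" using lb2 pos2 unfolding k_def[symmetric]
    by (simp add: divide_less_eq mult.commute)
  have l2h: "beta < h*(1+beta-k)" using l2 h(1) pos2
    by (smt (verit) mult_right_mono)
  have l1: "1 - beta < th*(1+alpha-beta)" using lb1 pos1
    by (simp add: divide_less_eq mult.commute)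
  have l1h: "1 - beta < h*(1+alpha-beta)" using l1 h(1) pos1
    by (smt (verit) mult_right_mono)
  have root: "t * (theta_upper tau beta)^2 + (1+beta) * theta_upper tau beta + beta - 1 = 0"
    using thu_root[of tau beta] t0 b0 bs s0 unfolding t_def by simp
  have P: "t*h^2 + (1+beta)*h + beta - 1 \<le> 0"
  proof -
    have "h^2 \<le> (theta_upper tau beta)^2" using h h0 by (intro power_mono) auto
    then have "t*h^2 \<le> t*(theta_upper tau beta)^2" using t0 by simp
    moreover have "(1+beta)*h \<le> (1+beta)*theta_upper tau beta" using h b0 by simp
    ultimately show ?thesis using root by linarith
  qed
  have h1: "h < 1"
  proof (rule ccontr)
    assume "\<not> h < 1"
    then have "h \<ge> 1" by simp
    then have "h^2 \<ge> 1" by (simp add: one_le_power)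
    then have "t*h^2 \<ge> t" using t0 by simp
    moreover have "(1+beta)*h \<ge> 1+beta" using \<open>h\<ge>1\<close> b0 by simp
    ultimately show False using P t0 b0 by linarith
  qed
  have A: "(1-h)*(1+bn) + h*tau*(1+an) \<le> 1+beta - th*(1+beta-tau*(1+alpha))"
  proof -
    have "(1-h)*(1+bn) \<le> (1-h)*(1+beta)" using h1 bn by simp
    moreover have "h*tau*(1+an) \<le> h*k" unfolding k_def using h0 tau0 an by simp
    moreover have "th*(1+beta-k) \<le> h*(1+beta-k)" using h pos2 by simp
    ultimately show ?thesis unfolding k_def[symmetric] by (simp add: algebra_simps)
  qed
  have c1: "h*bn*(1+bn) \<le> h*beta*(1+beta)"
  proof -
    have "bn*(1+bn) \<le> beta*(1+beta)" using bn by (intro mult_mono) auto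
    then show ?thesis using h0 by (simp add: mult.assoc)
  qed
  have c2: "h^2*tau*an*(1+an)/(1-h) \<le> h^2*k*alpha/(1-h)"
  proof -
    have "an*(1+an) \<le> alpha*(1+alpha)" using an by (intro mult_mono) auto
    then have "h^2*tau*(an*(1+an)) \<le> h^2*tau*(alpha*(1+alpha))" using tau0 by (intro mult_left_mono) auto
    then show ?thesis unfolding k_def using h1 by (intro divide_right_mono) (auto simp: algebra_simps)
  qed
  have c3: "bn*(1-bn) \<le> beta*(1-beta)"
  proof -
    have "beta*(1-beta) - bn*(1-bn) = (beta-bn)*(1-beta-bn)" by (simp add: algebra_simps)
    moreover have "(beta-bn)*(1-beta-bn) \<ge> 0" using bn bs s0 by simp
    ultimately show ?thesis by simp
  qed
  define mm :: real where "mm = th^2 * (1 - k) * s"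
  have ts: "t = s - 2*beta" unfolding t_def s_def by simp
  have G: "h*(1-h)*beta*(1+beta) + h^2*k*alpha + (1-h)*beta*(1-beta) \<le> (1-h)*((1-beta) - mm)"
  proof -
    have id: "(1-h)*((1-beta) - mm) - (h*(1-h)*beta*(1+beta) + h^2*k*alpha + (1-h)*beta*(1-beta))
        = (1-beta-(1+beta)*h-t*h^2) + (h^2*(s-k*alpha) - h^2*((1-k)*(1+s)))
          + (h^2*(1-k) - (1-h)^2*beta*(1-beta)) + (h^2*(1-k)* s - mm) + (mm - (1-h)*mm)"
      unfolding ts by (simp add: algebra_simps power2_eq_square)
    have sk: "s - k*alpha \<ge> (1-k)*(1+s)"
    proof -
      have "s - k*alpha - (1-k)*(1+s) = alpha*(1-k)"
        unfolding s_def k_def using tau0 by (simp add: field_simps)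
      moreover have "alpha*(1-k) \<ge> 0" using a0 k1 by simp
      ultimately show ?thesis by linarith
    qed
    have q1: "h*(1-k) \<ge> beta*(1-h)" using l2h by (simp add: algebra_simps)
    have q2: "h \<ge> (1-h)*(1-beta)"
    proof -
      have "h*(1+alpha-beta) \<le> h*(2-beta)" using as s0 h0 by simp
      then show ?thesis using l1h by (simp add: algebra_simps)
    qed
    have q3: "h^2*(1-k) - (1-h)^2*beta*(1-beta) \<ge> 0"
    proof -
      have "h^2*(1-k) = h*(h*(1-k))" by (simp add: power2_eq_square)
      also have "\<dots> \<ge> h*(beta*(1-h))" using q1 h0 by simp
      finally have e1: "h^2*(1-k) \<ge> h*(beta*(1-h))" .
      have e2: "h*(beta*(1-h)) \<ge> ((1-h)*(1-beta))*(beta*(1-h))"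
        using q2 b0 h1 by (intro mult_right_mono) auto
      have e3: "((1-h)*(1-beta))*(beta*(1-h)) = (1-h)^2*beta*(1-beta)"
        by (simp add: power2_eq_square)
      show ?thesis using e1 e2 e3 by linarith
    qed
    have q4: "h^2*(s - k*alpha) - h^2*((1-k)*(1+s)) \<ge> 0"
    proof -
      have "h^2*(s - k*alpha) \<ge> h^2*((1-k)*(1+s))" using sk by (simp add: mult_left_mono)
      then show ?thesis by linarith
    qed
    have q5: "h^2*(1-k)* s - mm \<ge> 0"
    proof -
      have "th^2 \<le> h^2" using h th0 by (intro power_mono) auto
      moreover have "(1-k)* s \<ge> 0" using k1 s0 by simp
      ultimately have "th^2*((1-k)* s) \<le> h^2*((1-k)* s)" by (rule mult_right_mono)
      then show ?thesis unfolding mm_def by (simp add: mult.assoc)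
    qed
    have m0: "mm \<ge> 0" unfolding mm_def using k1 s0 by simp
    have q6: "mm - (1-h)*mm \<ge> 0" using m0 h0 h1 by (simp add: mult_left_le_one_le)
    have "1-beta-(1+beta)*h-t*h^2 \<ge> 0" using P by simp
    then have "(1-h)*((1-beta) - mm) - (h*(1-h)*beta*(1+beta) + h^2*k*alpha + (1-h)*beta*(1-beta)) \<ge> 0"
      unfolding id using q3 q4 q5 q6 by linarith
    then show ?thesis by linarith
  qed
  have C: "h*beta*(1+beta) + h^2*k*alpha/(1-h) + beta*(1-beta) \<le> (1-beta) - mm"
  proof -
    have hp: "1-h > 0" using h1 by simp
    have "(h*beta*(1+beta) + h^2*k*alpha/(1-h) + beta*(1-beta))*(1-h)
        = h*(1-h)*beta*(1+beta) + h^2*k*alpha + (1-h)*beta*(1-beta)"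
      using hp by (simp add: field_simps)
    then have "(h*beta*(1+beta) + h^2*k*alpha/(1-h) + beta*(1-beta))*(1-h) \<le> ((1-beta) - mm)*(1-h)"
      using G by (simp add: mult.commute)
    then show ?thesis using hp by simp
  qed
  have fin: "h*bn*(1+bn) + h^2*tau*an*(1+an)/(1-h) + bn*(1-bn) \<le> (1-beta) - mm"
    using c1 c2 c3 C by linarith
  show ?thesis using th0 h0 h1 A fin unfolding mm_def k_def s_def by simp
qed


lemma sq_sum_le: "(norm (a - c::'a::real_normed_vector))^2 \<le> 2*(norm (a-b))^2 + 2*(norm (b-c))^2"
proof -
  have "norm (a-c) \<le> norm (a-b) + norm (b-c)" using norm_diff_triangle_le[of a b "norm (a-b)" c "norm (b-c)"] by simp
  then have "(norm (a-c))^2 \<le> (norm (a-b) + norm (b-c))^2" by (simp add: power_mono)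
  also have "\<dots> \<le> 2*(norm (a-b))^2 + 2*(norm (b-c))^2"
  proof -
    have "0 \<le> (norm (a-b) - norm (b-c))^2" by simp
    then show ?thesis by (simp add: power2_eq_square algebra_simps)
  qed
  finally show ?thesis .
qed
lemma tseng_id:
  fixes d e g :: "'a::real_inner"
  shows "(norm (d - lam *\<^sub>R e))^2 = (norm (d + lam *\<^sub>R g))^2 - (norm (lam *\<^sub>R g))^2
      + (lam * norm e)^2 - 2*lam*inner (g + e) d"
  unfolding power_mult_distrib power2_norm_eq_inner
  by (simp add: inner_add_left inner_add_right inner_diff_left inner_diff_right
      inner_commute algebra_simps power2_eq_square)

lemma tseng:
  fixes w y p u up a1 a2 ap :: "'a::real_inner"
  assumes res: "w - lamn *\<^sub>R a1 = y + lamn *\<^sub>R u"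
  and mono: "inner ((u + a2) - (up + ap)) (y - p) \<ge> r * (norm (y-p))^2"
  and zp: "ap + up = 0"
  and lip: "(lamn * norm (a2 - a1))^2 \<le> mu * (norm (w - y))^2"
  and lam: "lamn \<ge> lh" "lh > 0" and r: "r>0" and mu: "0<mu" "mu<1"
  shows "(norm (y - lamn *\<^sub>R (a2 - a1) - p))^2 \<le> (1 - (1/2)*min (1-mu) (2*lh*r)) * (norm (w-p))^2"
proof -
  have wdef: "w = y + lamn *\<^sub>R u + lamn *\<^sub>R a1" using res by (simp add: algebra_simps)
  have eq: "(norm (y - lamn *\<^sub>R (a2 - a1) - p))^2 = (norm (w-p))^2 - (norm (w-y))^2
      + (lamn * norm (a2 - a1))^2 - 2*lamn*inner (u+a2) (y-p)"
  proof -
    have e1: "y - lamn *\<^sub>R (a2 - a1) - p = (y - p) - lamn *\<^sub>R (a2 - a1)" by simp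
    have e2: "w - p = (y - p) + lamn *\<^sub>R (u + a1)" using wdef by (simp add: algebra_simps)
    have e3: "w - y = lamn *\<^sub>R (u + a1)" using wdef by (simp add: algebra_simps)
    have e4: "(u + a1) + (a2 - a1) = u + a2" by simp
    show ?thesis unfolding e1 e2 e3 using tseng_id[of "y-p" lamn "a2-a1" "u+a1"] e4 by simp
  qed
  have m2: "inner (u+a2) (y-p) \<ge> r * (norm (y-p))^2"
  proof -
    have z2: "up + ap = 0" using zp by (simp add: add.commute)
    have eqq: "(u + a2) - (up + ap) = u + a2" unfolding z2 by simp
    show ?thesis using mono unfolding eqq .
  qed
  define X where "X = (norm (w-y))^2"
  define Y where "Y = (norm (y-p))^2"
  define W where "W = (norm (w-p))^2"
  define c where "c = min (1-mu) (2*lh*r)"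
  have X0: "X \<ge> 0" "Y \<ge> 0" unfolding X_def Y_def by auto
  have WXY: "W \<le> 2*X + 2*Y" unfolding W_def X_def Y_def using sq_sum_le by blast
  have lam0: "lamn > 0" using lam by simp
  have s1: "2*lamn*inner (u+a2) (y-p) \<ge> 2*lamn*(r*Y)" unfolding Y_def using m2 lam0 by simp
  have s2: "2*lamn*(r*Y) \<ge> c*Y"
  proof -
    have "c \<le> 2*lamn*r" unfolding c_def using lam r by (smt (verit) mult_right_mono)
    then show ?thesis using X0 by (smt (verit) mult_right_mono mult.assoc)
  qed
  have s3: "(1-mu)*X \<ge> c*X" unfolding c_def using X0 by (simp add: mult_right_mono)
  have c0: "c \<ge> 0" unfolding c_def using lam r mu by simp
  have s4: "c*(X+Y) \<ge> c*(W/2)"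
  proof -
    have "W/2 \<le> X+Y" using WXY by simp
    then show ?thesis using c0 by (rule mult_left_mono)
  qed
  have "(norm (y - lamn *\<^sub>R (a2 - a1) - p))^2 \<le> W - X + mu*X - c*Y"
    unfolding eq using lip s1 s2 unfolding W_def X_def by linarith
  also have "\<dots> \<le> W - c*(X+Y)" using s3 by (simp add: algebra_simps)
  also have "\<dots> \<le> (1 - (1/2)*c) * W" using s4 by (simp add: algebra_simps)
  finally show ?thesis unfolding W_def c_def .
qed



lemma conv_id:
  fixes a b :: "'a::real_inner" and t :: real
  shows "(norm ((1-t) *\<^sub>R a + t *\<^sub>R b))^2 = (1-t)*(norm a)^2 + t*(norm b)^2 - t*(1-t)*(norm (a-b))^2"
  unfolding power2_norm_eq_inner
  by (simp add: inner_add_left inner_add_right inner_diff_left inner_diff_right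
      inner_commute algebra_simps)

lemma cross_lb:
  fixes e1 e0 :: "'a::real_inner"
  assumes "0 \<le> b"
  shows "(norm (e1 - b *\<^sub>R e0))^2 \<ge> (1-b)*(norm e1)^2 + (b^2-b)*(norm e0)^2"
proof -
  have eq: "(norm (e1 - b *\<^sub>R e0))^2 = (norm e1)^2 - 2*b*inner e1 e0 + b^2*(norm e0)^2"
    unfolding power2_norm_eq_inner
    by (simp add: inner_diff_left inner_diff_right inner_commute algebra_simps power2_eq_square)
  have "0 \<le> (norm (e1 - e0))^2" by simp
  also have "(norm (e1 - e0))^2 = (norm e1)^2 - 2*inner e1 e0 + (norm e0)^2"
    unfolding power2_norm_eq_inner
    by (simp add: inner_diff_left inner_diff_right inner_commute algebra_simps)
  finally have "2*inner e1 e0 \<le> (norm e1)^2 + (norm e0)^2" by simp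
  then have "b*(2*inner e1 e0) \<le> b*((norm e1)^2 + (norm e0)^2)" using assms by (rule mult_left_mono)
  then show ?thesis unfolding eq by (simp add: algebra_simps)
qed

lemma inertial:
  fixes xn xm xs p v w z :: "'a::real_inner"
  assumes w: "w = xn + an *\<^sub>R (xn - xm)" and z: "z = xn + bn *\<^sub>R (xn - xm)"
  and xs: "xs = (1-h) *\<^sub>R z + h *\<^sub>R v"
  and V: "(norm (v-p))^2 \<le> tau * (norm (w-p))^2"
  and h: "0<h" "h<1" and bn: "0 \<le> bn"
  shows "(norm (xs-p))^2 + ((1-h)/h)*(1-bn)*(norm (xs-xn))^2 \<le>
     ((1-h)*(1+bn) + h*tau*(1+an))*(norm (xn-p))^2
   + ((1-h)*bn*(1+bn) + h*tau*an*(1+an) + ((1-h)/h)*(bn - bn^2))*(norm (xn-xm))^2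
   - ((1-h)*bn + h*tau*an)*(norm (xm-p))^2"
proof -
  define A where "A = (norm (xn-p))^2"
  define M where "M = (norm (xm-p))^2"
  define D where "D = (norm (xn-xm))^2"
  define D1 where "D1 = (norm (xs-xn))^2"
  define Z where "Z = (norm (z-p))^2"
  define W where "W = (norm (w-p))^2"
  define Vv where "Vv = (norm (v-p))^2"
  define S where "S = (norm (xs-z))^2"
  have i1: "(norm (xs-p))^2 = (1-h)*Z + h*Vv - h*(1-h)*(norm ((z-p)-(v-p)))^2"
  proof -
    have "xs - p = (1-h) *\<^sub>R (z-p) + h *\<^sub>R (v-p)" unfolding xs by (simp add: algebra_simps)
    then show ?thesis using conv_id[of h "z-p" "v-p"] unfolding Z_def Vv_def by simp
  qed
  have gen: "\<And>c q. (norm (xn + c *\<^sub>R (xn - xm) - p))^2 = (1+c)*A - c*M + c*(1+c)*D"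
  proof -
    fix c :: real
    have "xn + c *\<^sub>R (xn - xm) - p = (1-(-c)) *\<^sub>R (xn-p) + (-c) *\<^sub>R (xm-p)" by (simp add: algebra_simps)
    then show "(norm (xn + c *\<^sub>R (xn - xm) - p))^2 = (1+c)*A - c*M + c*(1+c)*D"
      using conv_id[of "-c" "xn-p" "xm-p"] unfolding A_def M_def D_def by (simp add: algebra_simps)
  qed
  have iZ: "Z = (1+bn)*A - bn*M + bn*(1+bn)*D" unfolding Z_def z using gen .
  have iW: "W = (1+an)*A - an*M + an*(1+an)*D" unfolding W_def w using gen .
  define E where "E = (1-h)/h"
  define NZ where "NZ = (norm ((z-p)-(v-p)))^2"
  have i4: "h*(1-h)*NZ = E*S"
  proof -
    have "xs - z = h *\<^sub>R (v - z)" unfolding xs by (simp add: algebra_simps)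
    then have "S = h^2 * (norm (v-z))^2" unfolding S_def by (simp add: power_mult_distrib)
    moreover have "norm ((z-p)-(v-p)) = norm (v - z)" by (simp add: norm_minus_commute)
    ultimately show ?thesis using h unfolding E_def NZ_def by (simp add: field_simps power2_eq_square)
  qed
  have i5: "S \<ge> (1-bn)*D1 + (bn^2-bn)*D"
  proof -
    have ee: "xs - z = (xs - xn) - bn *\<^sub>R (xn - xm)" unfolding z by (simp add: algebra_simps)
    show ?thesis unfolding S_def D1_def D_def ee using cross_lb[OF bn, of "xs-xn" "xn-xm"] .
  qed
  have hc: "E \<ge> 0" unfolding E_def using h by simp
  have i6: "E*S \<ge> E*((1-bn)*D1 + (bn^2-bn)*D)" using i5 hc by (rule mult_left_mono)
  have i6': "E*S \<ge> E*(1-bn)*D1 + E*((bn^2-bn)*D)" using i6 by (simp add: algebra_simps)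
  have i7: "h*Vv \<le> h*(tau*W)" using V h unfolding Vv_def W_def by simp
  have i1': "(norm (xs-p))^2 = (1-h)*Z + h*Vv - h*(1-h)*NZ" using i1 unfolding NZ_def .
  have "(norm (xs-p))^2 + E*(1-bn)*D1 \<le> (1-h)*Z + h*(tau*W) - E*((bn^2-bn)*D)"
    using i1' i4 i6' i7 by linarith
  also have "\<dots> = ((1-h)*(1+bn) + h*tau*(1+an))*A
   + ((1-h)*bn*(1+bn) + h*tau*an*(1+an) + E*(bn - bn^2))*D
   - ((1-h)*bn + h*tau*an)*M" unfolding iZ iW by (simp add: algebra_simps)
  finally show ?thesis unfolding A_def M_def D_def D1_def E_def .
qed


lemma lam_eventually:
  fixes lam p_n mu_n :: "nat \<Rightarrow> real"
  assumes low: "\<And>k. lam (Suc k) \<ge> lh" and lh: "lh > 0"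
  and le: "\<And>n. n \<ge> 1 \<Longrightarrow> lam (Suc n) \<le> lam n + p_n n"
  and ps: "summable p_n" "\<And>n. p_n n \<ge> 0"
  and mlim: "mu_n \<longlonglongrightarrow> 0" and mu: "0<mu" "mu<1"
  shows "\<exists>N. \<forall>n\<ge>N. ((mu_n n + mu) * lam n / lam (Suc n))^2 < mu"
proof -
  define q where "q i = p_n (Suc i)" for i
  have qs: "summable q" unfolding q_def using summable_ignore_initial_segment[OF ps(1), of 1] by simp
  have q0: "\<And>i. q i \<ge> 0" unfolding q_def using ps(2) by simp
  define g where "g k = lam (Suc k) - (\<Sum>i<k. q i)" for k
  have dec: "decseq g"
  proof (rule decseq_SucI)
    fix k
    have "lam (Suc (Suc k)) \<le> lam (Suc k) + q k" unfolding q_def using le[of "Suc k"] by simp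
    then show "g (Suc k) \<le> g k" unfolding g_def by simp
  qed
  have bnd: "\<forall>i. lh - suminf q \<le> g i"
  proof
    fix i
    have "(\<Sum>j<i. q j) \<le> suminf q" using sum_le_suminf[OF qs, of "{..<i}"] q0 by simp
    then show "lh - suminf q \<le> g i" unfolding g_def using low[of i] by simp
  qed
  obtain Lg where Lg: "g \<longlonglongrightarrow> Lg" using decseq_convergent[OF dec bnd] by blast
  have S: "(\<lambda>k. \<Sum>i<k. q i) \<longlonglongrightarrow> suminf q" using summable_LIMSEQ[OF qs] .
  have ls: "(\<lambda>k. lam (Suc k)) \<longlonglongrightarrow> Lg + suminf q"
  proof -
    have "(\<lambda>k. g k + (\<Sum>i<k. q i)) \<longlonglongrightarrow> Lg + suminf q" using Lg S by (rule tendsto_add)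
    then show ?thesis unfolding g_def by simp
  qed
  define l where "l = Lg + suminf q"
  have l0: "l \<ge> lh" unfolding l_def using LIMSEQ_le_const[OF ls, of lh] low by blast
  have lnz: "l \<noteq> 0" using l0 lh by simp
  have ls2: "(\<lambda>k. lam (Suc (Suc k))) \<longlonglongrightarrow> l" using LIMSEQ_Suc[OF ls] unfolding l_def .
  have m2: "(\<lambda>k. mu_n (Suc k)) \<longlonglongrightarrow> 0" using LIMSEQ_Suc[OF mlim] .
  have r: "(\<lambda>k. ((mu_n (Suc k) + mu) * lam (Suc k) / lam (Suc (Suc k)))^2) \<longlonglongrightarrow> ((0 + mu) * l / l)^2"
    by (intro tendsto_intros m2 ls2 lnz) (use ls l_def in simp)
  have lim: "((0 + mu) * l / l)^2 = mu^2" using lnz by simp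
  have "mu^2 < mu" using mu by (simp add: power2_eq_square)
  then have "eventually (\<lambda>k. ((mu_n (Suc k) + mu) * lam (Suc k) / lam (Suc (Suc k)))^2 < mu) sequentially"
    using order_tendstoD(2)[OF r] lim by simp
  then obtain N where N: "\<And>k. k \<ge> N \<Longrightarrow> ((mu_n (Suc k) + mu) * lam (Suc k) / lam (Suc (Suc k)))^2 < mu"
    unfolding eventually_sequentially by blast
  show ?thesis
  proof (intro exI allI impI)
    fix n assume "n \<ge> Suc N"
    then obtain k where k: "n = Suc k" "k \<ge> N" by (cases n) auto
    show "((mu_n n + mu) * lam n / lam (Suc n))^2 < mu" using N[OF k(2)] k(1) by simp
  qed
qed


theorem theorem4p2:
  fixes A :: "'a::{real_inner, complete_space} \<Rightarrow> 'a"
    and B :: "'a \<Rightarrow> 'a set"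
    and x w z y :: "nat \<Rightarrow> 'a"
    and lam alpha_n beta_n theta_n mu_n p_n :: "nat \<Rightarrow> real"
    and mu L r alpha beta theta :: real
  assumes Omega_ne: "zeros_sum A B \<noteq> {}"
    and L_pos: "L > 0" and r_pos: "r > 0"
    and ops: "(L-lipschitz_on UNIV A \<and> strongly_monotone_op r A \<and> maximal_monotone B)
            \<or> (L-lipschitz_on UNIV A \<and> monotone_op A \<and> maximal_monotone B \<and> strongly_monotone_setop r B)"
    and mu: "0 < mu" "mu < 1"
    and lam1: "lam 1 > 0"
    and mu_n_nonneg: "\<And>n. mu_n n \<ge> 0"
    and p_n_nonneg: "\<And>n. p_n n \<ge> 0"
    and w_def: "\<And>n. n \<ge> 1 \<Longrightarrow> w n = x n + alpha_n n *\<^sub>R (x n - x (n - 1))"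
    and z_def: "\<And>n. n \<ge> 1 \<Longrightarrow> z n = x n + beta_n n *\<^sub>R (x n - x (n - 1))"
    and y_def: "\<And>n. n \<ge> 1 \<Longrightarrow> is_resolvent_value (lam n) B (w n - lam n *\<^sub>R A (w n)) (y n)"
    and lam_upd: "\<And>n. n \<ge> 1 \<Longrightarrow> lam (Suc n) =
        (if A (w n) \<noteq> A (y n)
         then min ((mu_n n + mu) * norm (w n - y n) / norm (A (w n) - A (y n))) (lam n + p_n n)
         else lam n + p_n n)"
    and no_stop: "\<And>n. n \<ge> 1 \<Longrightarrow> w n \<noteq> y n"
    and x_upd: "\<And>n. n \<ge> 1 \<Longrightarrow> x (Suc n) =
        (1 - theta_n n) *\<^sub>R z n + theta_n n *\<^sub>R (y n - lam n *\<^sub>R (A (y n) - A (w n)))"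
    and c1: "\<And>n. n \<ge> 1 \<Longrightarrow> 0 \<le> beta_n n \<and> beta_n n \<le> beta"
    and beta_bd: "beta < (1/2) * (1 / tau_param mu L (lam 1) r - 1)"
    and c2: "\<And>n. n \<ge> 1 \<Longrightarrow> 0 \<le> alpha_n n \<and> alpha_n n \<le> alpha"
    and alpha_bd: "alpha < (1 - tau_param mu L (lam 1) r) / tau_param mu L (lam 1) r"
    and theta_lb: "max ((1 - beta) / (1 + alpha - beta))
                       (beta / (1 + beta - tau_param mu L (lam 1) r * (1 + alpha))) < theta"
    and c3: "\<And>n. n \<ge> 1 \<Longrightarrow> theta \<le> theta_n n \<and> theta_n n \<le> theta_n (Suc n)
                  \<and> theta_n n \<le> theta_upper (tau_param mu L (lam 1) r) beta"
    and p_summable: "summable p_n"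
    and mu_n_lim: "mu_n \<longlonglongrightarrow> 0"
  shows "\<exists>p \<in> zeros_sum A B. \<exists>q. 0 < q \<and> q < 1 \<and> (\<exists>K \<ge> 0.
            \<forall>n. (norm (x n - p))\<^sup>2 \<le> K * q ^ n)"
proof -
  define lh where "lh = lam_hat mu L (lam 1)"
  define tau where "tau = tau_param mu L (lam 1) r"
  have lh_def': "lh = min (mu/L) (lam 1)" unfolding lh_def lam_hat_def ..
  have lh0: "lh > 0" unfolding lh_def' using mu L_pos lam1 by simp
  have tau_def': "tau = 1 - (1/2) * min (1 - mu) (2 * lh * r)"
    unfolding tau_def tau_param_def lh_def ..
  have tau_bd: "1/2 < tau" "tau < 1"
  proof -
    have "min (1 - mu) (2 * lh * r) > 0" using mu lh0 r_pos by simp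
    moreover have "min (1 - mu) (2 * lh * r) < 1" using mu by simp
    ultimately show "1/2 < tau" "tau < 1" unfolding tau_def' by simp_all
  qed
  obtain p where pO: "p \<in> zeros_sum A B" using Omega_ne by blast
  then obtain up where up: "up \<in> B p" "A p + up = 0" unfolding zeros_sum_def by blast
  have lipA: "L-lipschitz_on UNIV A" using ops by blast
  have monoB: "monotone_setop B" using ops unfolding maximal_monotone_def by blast
  have mono_sum: "\<And>yy u. u \<in> B yy \<Longrightarrow>
      inner ((u + A yy) - (up + A p)) (yy - p) \<ge> r * (norm (yy - p))^2"
  proof -
    fix yy u assume u: "u \<in> B yy"
    have split: "inner ((u + A yy) - (up + A p)) (yy - p) = inner (u - up) (yy - p) + inner (A yy - A p) (yy - p)"
      by (simp add: inner_diff_left inner_add_left algebra_simps)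
    show "inner ((u + A yy) - (up + A p)) (yy - p) \<ge> r * (norm (yy - p))^2"
      using ops
    proof
      assume h: "L-lipschitz_on UNIV A \<and> strongly_monotone_op r A \<and> maximal_monotone B"
      have "inner (A yy - A p) (yy - p) \<ge> r * (norm (yy - p))^2"
        using h unfolding strongly_monotone_op_def by blast
      moreover have "inner (u - up) (yy - p) \<ge> 0" using monoB u up(1) unfolding monotone_setop_def by blast
      ultimately show ?thesis unfolding split by linarith
    next
      assume h: "L-lipschitz_on UNIV A \<and> monotone_op A \<and> maximal_monotone B \<and> strongly_monotone_setop r B"
      have "inner (A yy - A p) (yy - p) \<ge> 0"
        using h unfolding monotone_op_def by blast
      moreover have "inner (u - up) (yy - p) \<ge> r * (norm (yy - p))^2"
        using h u up(1) unfolding strongly_monotone_setop_def by blast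
      ultimately show ?thesis unfolding split by linarith
    qed
  qed
  have lipn: "\<And>n. norm (A (w n) - A (y n)) \<le> L * norm (w n - y n)"
    using lipschitz_onD[OF lipA] by (simp add: dist_norm)
  have lam_low: "\<And>k. lam (Suc k) \<ge> lh"
  proof -
    fix k show "lam (Suc k) \<ge> lh"
    proof (induction k)
      case 0 then show ?case unfolding lh_def' by simp
    next
      case (Suc k)
      define n where "n = Suc k"
      have n1: "n \<ge> 1" unfolding n_def by simp
      have ln: "lam n \<ge> lh" using Suc unfolding n_def .
      have pn: "lam n + p_n n \<ge> lh" using ln p_n_nonneg[of n] by linarith
      show ?case
      proof (cases "A (w n) \<noteq> A (y n)")
        case True
        define nw where "nw = norm (w n - y n)"
        define na where "na = norm (A (w n) - A (y n))"
        have nw0: "nw > 0" unfolding nw_def using no_stop[OF n1] by simp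
        have na0: "na > 0" unfolding na_def using True by simp
        have naL: "na \<le> L * nw" unfolding na_def nw_def using lipn .
        have "mu / L = mu * nw / (L * nw)" using nw0 by simp
        also have "\<dots> \<le> mu * nw / na"
          using naL na0 mu nw0 by (intro divide_left_mono) auto
        also have "\<dots> \<le> (mu_n n + mu) * nw / na"
          using mu_n_nonneg[of n] nw0 na0 by (intro divide_right_mono mult_right_mono) auto
        finally have X: "(mu_n n + mu) * nw / na \<ge> lh" unfolding lh_def' by linarith
        have "lam (Suc n) = min ((mu_n n + mu) * nw / na) (lam n + p_n n)"
          using lam_upd[OF n1] True unfolding nw_def na_def by simp
        then show ?thesis unfolding n_def[symmetric] using X pn by simp
      next
        case False
        then have "lam (Suc n) = lam n + p_n n" using lam_upd[OF n1] by simp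
        then show ?thesis unfolding n_def[symmetric] using pn by simp
      qed
    qed
  qed
  have lam_pos1: "\<And>n. n \<ge> 1 \<Longrightarrow> lam n \<ge> lh"
  proof -
    fix n :: nat assume "n \<ge> 1"
    then obtain k where "n = Suc k" by (cases n) auto
    then show "lam n \<ge> lh" using lam_low by simp
  qed
  have lam_le: "\<And>n. n \<ge> 1 \<Longrightarrow> lam (Suc n) \<le> lam n + p_n n"
    using lam_upd by simp
  have lam_A: "\<And>n. n \<ge> 1 \<Longrightarrow> lam (Suc n) * norm (A (w n) - A (y n)) \<le> (mu_n n + mu) * norm (w n - y n)"
  proof -
    fix n :: nat assume n1: "n \<ge> 1"
    show "lam (Suc n) * norm (A (w n) - A (y n)) \<le> (mu_n n + mu) * norm (w n - y n)"
    proof (cases "A (w n) \<noteq> A (y n)")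
      case True
      define nw where "nw = norm (w n - y n)"
      define na where "na = norm (A (w n) - A (y n))"
      have na0: "na > 0" unfolding na_def using True by simp
      have "lam (Suc n) \<le> (mu_n n + mu) * nw / na"
        using lam_upd[OF n1] True unfolding nw_def na_def by simp
      then have "lam (Suc n) * na \<le> (mu_n n + mu) * nw" using na0 by (simp add: le_divide_eq)
      then show ?thesis unfolding nw_def na_def by simp
    next
      case False
      then show ?thesis using mu_n_nonneg[of n] mu by simp
    qed
  qed
  obtain N0 where N0: "\<And>n. n \<ge> N0 \<Longrightarrow> ((mu_n n + mu) * lam n / lam (Suc n))^2 < mu"
    using lam_eventually[of lh lam p_n mu_n mu, OF lam_low lh0 lam_le p_summable p_n_nonneg mu_n_lim mu] by blast
  define v where "v n = y n - lam n *\<^sub>R (A (y n) - A (w n))" for n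
  have contr: "\<And>n. n \<ge> 1 \<Longrightarrow> n \<ge> N0 \<Longrightarrow> (norm (v n - p))^2 \<le> tau * (norm (w n - p))^2"
  proof -
    fix n :: nat assume n1: "n \<ge> 1" and nN: "n \<ge> N0"
    obtain u where u: "u \<in> B (y n)" "w n - lam n *\<^sub>R A (w n) = y n + lam n *\<^sub>R u"
      using y_def[OF n1] unfolding is_resolvent_value_def by blast
    have ln: "lam n \<ge> lh" using lam_pos1[OF n1] .
    have lsn: "lam (Suc n) > 0" using lam_low[of n] lh0 by simp
    define rho where "rho = (mu_n n + mu) * lam n / lam (Suc n)"
    have rho0: "rho \<ge> 0" unfolding rho_def using mu_n_nonneg[of n] mu ln lh0 lsn by simp
    have "lam n * norm (A (y n) - A (w n)) = (lam n / lam (Suc n)) * (lam (Suc n) * norm (A (w n) - A (y n)))"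
      using lsn by (simp add: norm_minus_commute)
    also have "\<dots> \<le> (lam n / lam (Suc n)) * ((mu_n n + mu) * norm (w n - y n))"
      using lam_A[OF n1] ln lh0 lsn by (intro mult_left_mono) auto
    also have "\<dots> = rho * norm (w n - y n)" unfolding rho_def by simp
    finally have b1: "lam n * norm (A (y n) - A (w n)) \<le> rho * norm (w n - y n)" .
    have b0: "0 \<le> lam n * norm (A (y n) - A (w n))" using ln lh0 by simp
    have "(lam n * norm (A (y n) - A (w n)))^2 \<le> (rho * norm (w n - y n))^2"
      using b1 b0 by (rule power_mono)
    also have "\<dots> = rho^2 * (norm (w n - y n))^2" by (simp add: power_mult_distrib)
    also have "\<dots> \<le> mu * (norm (w n - y n))^2"
      using N0[OF nN] unfolding rho_def[symmetric] by (intro mult_right_mono) auto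
    finally have lip: "(lam n * norm (A (y n) - A (w n)))^2 \<le> mu * (norm (w n - y n))^2" .
    have ms: "inner ((u + A (y n)) - (up + A p)) (y n - p) \<ge> r * (norm (y n - p))^2"
      using mono_sum[OF u(1)] .
    have zp: "A p + up = 0" using up(2) .
    show "(norm (v n - p))^2 \<le> tau * (norm (w n - p))^2"
      unfolding v_def tau_def'
      using tseng[OF u(2) ms zp lip ln lh0 r_pos mu] .
  qed
  define a where "a n = (norm (x n - p))^2" for n
  define d where "d n = (norm (x n - x (n-1)))^2" for n
  define E where "E n = ((1 - theta_n n)/theta_n n)*(1-beta)" for n
  define kap where "kap = tau*(1+alpha)"
  define Ab where "Ab = 1+beta - theta*(1+beta-kap)"
  define mm where "mm = theta^2*(1-kap)*(1/tau-1)"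
  define q' where "q' = 1 - mm/(1-beta)"
  define q where "q = max Ab q'"
  have beta_bd': "beta < (1/2) * (1 / tau - 1)" using beta_bd unfolding tau_def .
  have alpha_bd': "alpha < (1 - tau) / tau" using alpha_bd unfolding tau_def .
  have lb1: "(1 - beta) / (1 + alpha - beta) < theta" using theta_lb by simp
  have lb2: "beta / (1 + beta - tau * (1 + alpha)) < theta" using theta_lb unfolding tau_def by simp
  have thu: "\<And>n. n \<ge> 1 \<Longrightarrow> theta_n n \<le> theta_upper tau beta" using c3 unfolding tau_def by blast
  have coefn: "\<And>n. n \<ge> 1 \<Longrightarrow> 0 < theta \<and> 0 < theta_n n \<and> theta_n n < 1 \<and>
   (1-theta_n n)*(1+beta_n n) + theta_n n*tau*(1+alpha_n n) \<le> 1+beta - theta*(1+beta-tau*(1+alpha)) \<and>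
   theta_n n*beta_n n*(1+beta_n n) + (theta_n n)^2*tau*alpha_n n*(1+alpha_n n)/(1-theta_n n) + beta_n n*(1-beta_n n)
     \<le> (1-beta) - theta^2*(1-tau*(1+alpha))*(1/tau-1)"
  proof -
    fix n :: nat assume n1: "n \<ge> 1"
    show "?thesis n"
      using coef[OF tau_bd, of "alpha_n n" alpha "beta_n n" beta theta "theta_n n"]
        c1[OF n1] c2[OF n1] beta_bd' alpha_bd' lb1 lb2 c3[OF n1] thu[OF n1] by blast
  qed
  have th0: "0 < theta" and th1: "theta < 1" using coefn[of 1] c3[of 1] by auto
  have b0: "0 \<le> beta" using c1[of 1] by simp
  have a0: "0 \<le> alpha" using c2[of 1] by simp
  have tau0: "tau > 0" using tau_bd by simp
  have b1: "beta < 1/2"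
  proof -
    have "1/tau < 2" using tau_bd by (simp add: field_simps)
    then show ?thesis using beta_bd' by simp
  qed
  have kap1: "kap < 1"
  proof -
    have "tau*(1+alpha) < tau*(1 + (1-tau)/tau)" using alpha_bd' tau0 by simp
    also have "\<dots> = 1" using tau0 by (simp add: field_simps)
    finally show ?thesis unfolding kap_def .
  qed
  have kap0: "kap > 0" unfolding kap_def using tau0 a0 by simp
  have pos2: "1+beta-kap > 0" using kap1 b0 by simp
  have Ab1: "Ab < 1"
  proof -
    have "beta < theta*(1+beta-kap)" using lb2 pos2 unfolding kap_def[symmetric]
      by (simp add: divide_less_eq mult.commute)
    then show ?thesis unfolding Ab_def by simp
  qed
  have Ab0: "Ab > 0"
  proof -
    have "theta*(1+beta-kap) < 1*(1+beta-kap)" using th1 pos2 by (intro mult_strict_right_mono) auto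
    then show ?thesis unfolding Ab_def using kap0 by simp
  qed
  have mm0: "mm > 0"
  proof -
    have "1/tau - 1 > 0" using tau_bd by (simp add: field_simps)
    then show ?thesis unfolding mm_def using th0 kap1 by simp
  qed
  have q'1: "q' < 1" unfolding q'_def using mm0 b1 by simp
  have q1: "q < 1" and q0: "q > 0" and qA: "Ab \<le> q" and qq': "q' \<le> q"
    unfolding q_def using Ab1 q'1 Ab0 by auto
  have E0: "\<And>n. n \<ge> 1 \<Longrightarrow> E n \<ge> 0"
  proof -
    fix n :: nat assume "n \<ge> 1"
    then have "0 < theta_n n" "theta_n n < 1" using coefn by auto
    then show "E n \<ge> 0" unfolding E_def using b1 by simp
  qed
  have Emono: "\<And>n. n \<ge> 2 \<Longrightarrow> E n \<le> E (n-1)"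
  proof -
    fix n :: nat assume n2: "n \<ge> 2"
    have h0: "0 < theta_n (n-1)" using coefn[of "n-1"] n2 by auto
    have hm: "theta_n (n-1) \<le> theta_n n" using c3[of "n-1"] n2 by (simp add: Suc_diff_Suc numeral_2_eq_2)
    have "1/theta_n n \<le> 1/theta_n (n-1)" using h0 hm by (simp add: frac_le)
    then have "(1 - theta_n n)/theta_n n \<le> (1 - theta_n (n-1))/theta_n (n-1)"
      using h0 hm by (simp add: diff_divide_distrib)
    then show "E n \<le> E (n-1)" unfolding E_def using b1 by (intro mult_right_mono) auto
  qed
  define N where "N = N0 + 2"
  define Phi where "Phi n = a n + E (n-1) * d n" for n
  have step: "\<And>n. n \<ge> N \<Longrightarrow> Phi (Suc n) \<le> q * Phi n"
  proof -
    fix n :: nat assume nN: "n \<ge> N"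
    have n1: "n \<ge> 1" and n2: "n \<ge> 2" and nN0: "n \<ge> N0" using nN unfolding N_def by auto
    define h where "h = theta_n n"
    define an where "an = alpha_n n"
    define bn where "bn = beta_n n"
    have cf: "0 < h" "h < 1"
      "(1-h)*(1+bn) + h*tau*(1+an) \<le> Ab"
      "h*bn*(1+bn) + h^2*tau*an*(1+an)/(1-h) + bn*(1-bn) \<le> (1-beta) - mm"
      using coefn[OF n1] unfolding h_def an_def bn_def Ab_def mm_def kap_def by auto
    have bnr: "0 \<le> bn" "bn \<le> beta" using c1[OF n1] unfolding bn_def by auto
    have anr: "0 \<le> an" "an \<le> alpha" using c2[OF n1] unfolding an_def by auto
    have xs: "x (Suc n) = (1-h) *\<^sub>R z n + h *\<^sub>R v n" unfolding h_def v_def using x_upd[OF n1] .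
    have ine: "(norm (x (Suc n) - p))^2 + ((1-h)/h)*(1-bn)*(norm (x (Suc n) - x n))^2 \<le>
     ((1-h)*(1+bn) + h*tau*(1+an))*(norm (x n - p))^2
   + ((1-h)*bn*(1+bn) + h*tau*an*(1+an) + ((1-h)/h)*(bn - bn^2))*(norm (x n - x (n-1)))^2
   - ((1-h)*bn + h*tau*an)*(norm (x (n-1) - p))^2"
      using inertial[OF w_def[OF n1] z_def[OF n1] xs contr[OF n1 nN0] cf(1) cf(2) bnr(1)[unfolded bn_def]]
      unfolding an_def bn_def .
    define Cn where "Cn = (1-h)*bn*(1+bn) + h*tau*an*(1+an) + ((1-h)/h)*(bn - bn^2)"
    define An where "An = (1-h)*(1+bn) + h*tau*(1+an)"
    define Bn where "Bn = (1-h)*bn + h*tau*an"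
    have En: "E n = ((1-h)/h)*(1-beta)" unfolding E_def h_def ..
    have hc: "(1-h)/h \<ge> 0" using cf by simp
    have dn0: "d n \<ge> 0" "d (Suc n) \<ge> 0" "a n \<ge> 0" "a (n-1) \<ge> 0" unfolding d_def a_def by auto
    have ine': "a (Suc n) + ((1-h)/h)*(1-bn)*d (Suc n) \<le> An * a n + Cn * d n - Bn * a (n-1)"
      using ine unfolding a_def d_def An_def Bn_def Cn_def by simp
    have t1: "E n * d (Suc n) \<le> ((1-h)/h)*(1-bn)*d (Suc n)"
    proof -
      have "E n \<le> ((1-h)/h)*(1-bn)" unfolding En using hc bnr by (intro mult_left_mono) auto
      then show ?thesis using dn0 by (intro mult_right_mono) auto
    qed
    have t2: "Bn * a (n-1) \<ge> 0" unfolding Bn_def using cf bnr anr tau0 dn0 by simp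
    have t3: "An * a n \<le> q * a n"
    proof -
      have "An \<le> q" unfolding An_def using cf(3) qA by simp
      then show ?thesis using dn0 by (intro mult_right_mono) auto
    qed
    have t4: "Cn \<le> q' * E n"
    proof -
      have "Cn = ((1-h)/h)*(h*bn*(1+bn) + h^2*tau*an*(1+an)/(1-h) + bn*(1-bn))"
        unfolding Cn_def using cf(1,2) by (simp add: field_simps power2_eq_square)
      also have "\<dots> \<le> ((1-h)/h)*((1-beta) - mm)" using cf(4) hc by (intro mult_left_mono) auto
      also have "\<dots> = q' * E n"
      proof -
        have qq: "q'*(1-beta) = (1-beta) - mm" unfolding q'_def using b1 by (simp add: field_simps)
        show ?thesis unfolding En qq[symmetric] by (simp add: ac_simps)
      qed
      finally show ?thesis .
    qed
    have t5: "Cn * d n \<le> q * E (n-1) * d n"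
    proof -
      have "q' * E n \<le> q * E n" using qq' E0[OF n1] by (intro mult_right_mono) auto
      also have "\<dots> \<le> q * E (n-1)" using Emono[OF n2] q0 by (intro mult_left_mono) auto
      finally have "Cn \<le> q * E (n-1)" using t4 by linarith
      then show ?thesis using dn0 by (intro mult_right_mono) auto
    qed
    have "Phi (Suc n) = a (Suc n) + E n * d (Suc n)" unfolding Phi_def by simp
    also have "\<dots> \<le> q * a n + q * E (n-1) * d n" using ine' t1 t2 t3 t5 by linarith
    also have "\<dots> = q * Phi n" unfolding Phi_def by (simp add: algebra_simps)
    finally show "Phi (Suc n) \<le> q * Phi n" .
  qed
  have iter: "\<And>k. Phi (N+k) \<le> q^k * Phi N"
  proof -
    fix k show "Phi (N+k) \<le> q^k * Phi N"
    proof (induction k)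
      case 0 then show ?case by simp
    next
      case (Suc k)
      have "Phi (N + Suc k) \<le> q * Phi (N+k)" using step[of "N+k"] by simp
      also have "\<dots> \<le> q * (q^k * Phi N)" using Suc q0 by (intro mult_left_mono) auto
      finally show ?case by simp
    qed
  qed
  have aPhi: "\<And>n. n \<ge> N \<Longrightarrow> a n \<le> Phi n"
  proof -
    fix n :: nat assume "n \<ge> N"
    then have "n - 1 \<ge> 1" unfolding N_def by simp
    then have "E (n-1) \<ge> 0" using E0 by blast
    moreover have "d n \<ge> 0" unfolding d_def by simp
    ultimately show "a n \<le> Phi n" unfolding Phi_def by simp
  qed
  have a0': "\<And>n. a n \<ge> 0" unfolding a_def by simp
  have PhiN: "Phi N \<ge> 0" using aPhi[of N] a0'[of N] by simp
  define K where "K = Phi N / q^N + (\<Sum>i<N. a i / q^i)"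
  have K1: "Phi N / q^N \<ge> 0" using PhiN q0 by simp
  have K2: "(\<Sum>i<N. a i / q^i) \<ge> 0" using a0' q0 by (intro sum_nonneg) simp
  have bound: "\<And>n. a n \<le> K * q^n"
  proof -
    fix n :: nat
    show "a n \<le> K * q^n"
    proof (cases "n < N")
      case True
      have "a n / q^n \<le> (\<Sum>i<N. a i / q^i)"
        using True a0' q0 by (intro member_le_sum) auto
      then have "a n / q^n \<le> K" unfolding K_def using K1 by linarith
      then show ?thesis using q0 by (simp add: divide_le_eq)
    next
      case False
      then obtain k where k: "n = N + k" by (metis le_add_diff_inverse not_less)
      have "a n \<le> q^k * Phi N" using aPhi[of n] iter[of k] k by simp
      also have "\<dots> = (Phi N / q^N) * q^n" unfolding k using q0 by (simp add: power_add field_simps)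
      also have "\<dots> \<le> K * q^n" unfolding K_def using K2 q0 by (intro mult_right_mono) auto
      finally show ?thesis .
    qed
  qed
  show ?thesis
  proof (intro bexI[OF _ pO] exI conjI)
    show "0 < q" "q < 1" using q0 q1 by auto
    show "K \<ge> 0" unfolding K_def using K1 K2 by simp
    show "\<forall>n. (norm (x n - p))\<^sup>2 \<le> K * q ^ n" using bound unfolding a_def by blast
  qed
qed

end
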